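(* Let $S^1_\infty=\mathbb{R}\cup\{\infty\}$ with the projective action of $\mathrm{PSL}(2,\mathbb{R})$, and let $x\partial_x$ denote the smooth vector field on $S^1_\infty$ extending $x\partial_x\in\mathfrak{X}(\mathbb{R})$. If $Z\in\mathfrak{X}(S^1_\infty)$ is invariant by some hyperbolic element whose fixed point set is $\{0,\infty\}$, then $Z=\varkappa\,x\partial_x$ for some $\varkappa\in\mathbb{R}$. In particular, if $H\subset\mathrm{PSL}(2,\mathbb{R})$ is a subgroup containing at least one hyperbolic element, and consisting of the identity, hyperbolic elements with fixed point set $\{0,\infty\}$ and possibly elliptic elements leaving $\{0,\infty\}$ invariant, then the space $\mathfrak{X}(S^1_\infty,H)$ of $H$-invariant vector fields equals $\mathbb{R}\,x\partial_x$ if $H$ has no elliptic element, and equals $0$ otherwise.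
   Context: An element of $\mathrm{PSL}(2,\mathbb{R})$, acting on $S^1_\infty$ by $x\mapsto(ax+b)/(cx+d)$, is hyperbolic if it has exactly two fixed points in $S^1_\infty$, and elliptic if it has none. *)

theory Defs
  imports "HOL-Analysis.Analysis"
begin

datatype ext = Fin real | Infty

definition smooth_fun :: "(real \<Rightarrow> real) \<Rightarrow> bool" where
  "smooth_fun f \<longleftrightarrow> (\<forall>n x. ((deriv ^^ n) f) differentiable (at x))"

text \<open>Elements of SL(2,R) as quadruples (a,b,c,d) standing for the matrix
  [[a,b],[c,d]]; PSL(2,R) = SL(2,R)/{+-1}. All notions below depend only on the
  class in PSL(2,R).\<close>
type_synonym mat2 = "real \<times> real \<times> real \<times> real"

definition SL2 :: "mat2 set" where
  "SL2 = {(a,b,c,d). a*d - b*c = 1}"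

definition mmult :: "mat2 \<Rightarrow> mat2 \<Rightarrow> mat2" where
  "mmult = (\<lambda>(a,b,c,d) (a',b',c',d'). (a*a' + b*c', a*b' + b*d', c*a' + d*c', c*b' + d*d'))"

definition minv :: "mat2 \<Rightarrow> mat2" where
  "minv = (\<lambda>(a,b,c,d). (d, -b, -c, a))"

definition mid :: mat2 where "mid = (1,0,0,1)"
definition mnegid :: mat2 where "mnegid = (-1,0,0,-1)"

fun act :: "mat2 \<Rightarrow> ext \<Rightarrow> ext" where
  "act (a,b,c,d) (Fin x) = (if c*x + d = 0 then Infty else Fin ((a*x + b)/(c*x + d)))"
| "act (a,b,c,d) Infty = (if c = 0 then Infty else Fin (a/c))"

definition fixset :: "mat2 \<Rightarrow> ext set" where
  "fixset h = {p. act h p = p}"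

definition hyperbolic :: "mat2 \<Rightarrow> bool" where
  "hyperbolic h \<longleftrightarrow> h \<in> SL2 \<and> finite (fixset h) \<and> card (fixset h) = 2"

definition elliptic :: "mat2 \<Rightarrow> bool" where
  "elliptic h \<longleftrightarrow> h \<in> SL2 \<and> fixset h = {}"

text \<open>Charts: at finite points the coordinate x; at infinity the coordinate y = 1/x.
  A vector field Z on S^1_infty is encoded by Z :: ext => real, where Z (Fin x) is
  the coefficient of d/dx at x and Z Infty is the coefficient of d/dy at y = 0.
  Since d/dx = -y^2 d/dy, in the y-chart the field reads
  y \<mapsto> -y^2 Z(Fin (1/y)) for y \<noteq> 0.\<close>
definition infchart_rep :: "(ext \<Rightarrow> real) \<Rightarrow> real \<Rightarrow> real" where
  "infchart_rep Z y = (if y = 0 then Z Infty else - (y^2) * Z (Fin (1/y)))"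

definition vector_fields :: "(ext \<Rightarrow> real) set" where
  "vector_fields = {Z. smooth_fun (\<lambda>x. Z (Fin x)) \<and> smooth_fun (infchart_rep Z)}"

text \<open>Differential of the action of h at p, computed in the charts at p and at act h p.\<close>
fun dact :: "mat2 \<Rightarrow> ext \<Rightarrow> real" where
  "dact (a,b,c,d) (Fin x) =
     (if c*x + d = 0 then deriv (\<lambda>t. (c*t + d)/(a*t + b)) x
      else deriv (\<lambda>t. (a*t + b)/(c*t + d)) x)"
| "dact (a,b,c,d) Infty =
     (if c = 0 then deriv (\<lambda>u. (c + d*u)/(a + b*u)) 0
      else deriv (\<lambda>u. (a + b*u)/(c + d*u)) 0)"

definition invariant_by :: "mat2 \<Rightarrow> (ext \<Rightarrow> real) \<Rightarrow> bool" where
  "invariant_by h Z \<longleftrightarrow> (\<forall>p. Z (act h p) = dact h p * Z p)"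

text \<open>The vector field x d/dx; in the y-chart it is -y d/dy, vanishing at infinity.\<close>
fun xdx :: "ext \<Rightarrow> real" where
  "xdx (Fin x) = x"
| "xdx Infty = 0"

text \<open>A subgroup of PSL(2,R) is encoded by its preimage in SL(2,R): a subgroup of
  SL(2,R) containing -1.\<close>
definition psl_subgroup :: "mat2 set \<Rightarrow> bool" where
  "psl_subgroup H \<longleftrightarrow> H \<subseteq> SL2 \<and> mid \<in> H \<and> mnegid \<in> H \<and>
     (\<forall>g\<in>H. \<forall>h\<in>H. mmult g h \<in> H) \<and> (\<forall>h\<in>H. minv h \<in> H)"

definition invariant_fields :: "mat2 set \<Rightarrow> (ext \<Rightarrow> real) set" where
  "invariant_fields H = {Z \<in> vector_fields. \<forall>h\<in>H. invariant_by h Z}"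

end

theory Submission
  imports Defs
begin

lemma homog_linear:
  fixes f :: "real \<Rightarrow> real"
  assumes dif: "f differentiable (at 0)" and hom: "\<And>x. f (l*x) = l * f x"
    and l: "l > 0" "l \<noteq> 1"
  shows "\<exists>k. \<forall>x. f x = k * x"
proof -
  have f0: "f 0 = 0" using hom[of 0] l by (metis mult_cancel_right1 mult_zero_right)
  obtain D where D: "(f has_real_derivative D) (at 0)" using dif real_differentiable_def by blast
  obtain r where r: "0 < r" "r < 1" "\<And>x. f (r*x) = r * f x"
  proof (cases "l < 1")
    case True then show ?thesis using that l hom by blast
  next
    case False
    have r: "f ((1/l)*x) = (1/l) * f x" for x
      using hom[of "(1/l)*x"] l by (simp add: field_simps)
    have "0 < 1/l" "1/l < 1" using l False by auto
    then show ?thesis using that r by blast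
  qed
  have pw: "f (r^n*x) = r^n * f x" for n x
  proof (induction n arbitrary: x)
    case 0 then show ?case by simp
  next
    case (Suc n)
    have "f (r^Suc n * x) = f (r^n*(r*x))" by (simp add: mult_ac)
    also have "\<dots> = r^n * f (r*x)" by (rule Suc)
    also have "\<dots> = r^Suc n * f x" using r(3) by simp
    finally show ?case .
  qed
  have "f x = D * x" for x
  proof (cases "x = 0")
    case True then show ?thesis using f0 by simp
  next
    case False
    have s: "(\<lambda>n. r^n * x) \<longlonglongrightarrow> 0"
      using LIMSEQ_power_zero[of r] r tendsto_mult_left_zero by force
    have s2: "\<And>n. r^n * x \<noteq> 0" using False r by simp
    have "(\<lambda>n. (f (0 + r^n*x) - f 0) / (r^n*x)) = (\<lambda>n. f x / x)"
      using pw f0 s2 by (auto simp: field_simps)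
    then have "D = f x / x"
      using field_derivative_lim_unique[OF D s s2] by auto
    then show ?thesis using False by simp
  qed
  then show ?thesis by blast
qed

lemma hyp_form:
  assumes "hyperbolic h" "fixset h = {Fin 0, Infty}"
  shows "\<exists>a d. h = (a,0,0,d) \<and> a*d = 1 \<and> a \<noteq> d"
proof -
  obtain a b c d where h: "h = (a,b,c,d)" by (cases h) auto
  have i: "act h Infty = Infty" and z: "act h (Fin 0) = Fin 0" and o: "act h (Fin 1) \<noteq> Fin 1"
    using assms(2) unfolding fixset_def by (auto simp: set_eq_iff)
  from i h have c: "c = 0" by (cases "c = 0") auto
  have zz: "d \<noteq> 0 \<and> b/d = 0" using z unfolding h c by (auto split: if_splits)
  then have d: "d \<noteq> 0" "b = 0" by auto
  from assms(1) h c d have ad: "a*d = 1" by (auto simp: hyperbolic_def SL2_def)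
  have "a \<noteq> d" using o h c d by auto
  then show ?thesis using h c d ad by auto
qed

lemma dact_diag_fin: assumes "d \<noteq> 0" shows "dact (a,0,0,d) (Fin x) = a/d"
proof -
  have "((\<lambda>t. (a*t + 0)/(0*t + d)) has_real_derivative a/d) (at x)"
    using assms by (auto intro!: derivative_eq_intros)
  then have "deriv (\<lambda>t. (a*t + 0)/(0*t + d)) x = a/d" by (rule DERIV_imp_deriv)
  then show ?thesis using assms by simp
qed

lemma dact_diag_inf: assumes "a \<noteq> 0" shows "dact (a,0,0,d) Infty = d/a"
proof -
  have "((\<lambda>u. (0 + d*u)/(a + 0*u)) has_real_derivative d/a) (at 0)"
    using assms by (auto intro!: derivative_eq_intros)
  then have "deriv (\<lambda>u. (0 + d*u)/(a + 0*u)) 0 = d/a" by (rule DERIV_imp_deriv)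
  then show ?thesis using assms by simp
qed

lemma part1:
  assumes Z: "Z \<in> vector_fields" and ad: "a*d = 1" "a \<noteq> d" and inv: "invariant_by (a,0,0,d) Z"
  shows "\<exists>\<kappa>::real. Z = (\<lambda>p. \<kappa> * xdx p)"
proof -
  have a0: "a \<noteq> 0" and d0: "d \<noteq> 0" using ad by auto
  have "Z (act (a,0,0,d) Infty) = dact (a,0,0,d) Infty * Z Infty"
    using inv unfolding invariant_by_def by blast
  then have "Z Infty = (d/a) * Z Infty"
    unfolding dact_diag_inf[OF a0] by simp
  moreover have "d/a \<noteq> 1" using ad a0 by auto
  ultimately have zi: "Z Infty = 0"
    by (metis mult_cancel_right1)
  define f where "f = (\<lambda>x. Z (Fin x))"
  have "smooth_fun f" using Z unfolding vector_fields_def f_def by blast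
  then have dif: "f differentiable (at 0)"
    unfolding smooth_fun_def by (metis funpow.simps(1) id_apply)
  have hom: "f ((a/d)*x) = (a/d) * f x" for x
  proof -
    have "Z (act (a,0,0,d) (Fin x)) = dact (a,0,0,d) (Fin x) * Z (Fin x)"
      using inv unfolding invariant_by_def by blast
    moreover have "act (a,0,0,d) (Fin x) = Fin ((a/d)*x)" using d0 by simp
    ultimately show ?thesis unfolding dact_diag_fin[OF d0] f_def by simp
  qed
  have "d = 1/a" using ad a0 by (simp add: eq_divide_eq mult.commute)
  then have "a/d = a*a" by simp
  moreover have "a*a > 0" using a0 not_real_square_gt_zero by blast
  ultimately have lpos: "a/d > 0" by simp
  have l1: "a/d \<noteq> 1" using ad d0 by auto
  obtain k where k: "\<And>x. f x = k*x" using homog_linear[OF dif hom lpos l1] by blast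
  have "Z = (\<lambda>p. k * xdx p)"
  proof
    fix p show "Z p = k * xdx p" using k zi by (cases p) (auto simp: f_def)
  qed
  then show ?thesis by blast
qed

lemma deriv_lin: "deriv (\<lambda>x. k*x) = (\<lambda>_. (k::real))"
  by (rule ext, rule DERIV_imp_deriv, auto intro!: derivative_eq_intros)

lemma deriv_const: "deriv (\<lambda>x. (k::real)) = (\<lambda>_. 0)"
  by (rule ext, rule DERIV_imp_deriv, auto intro!: derivative_eq_intros)

lemma funpow_deriv_zero: "(deriv ^^ n) (\<lambda>_. (0::real)) = (\<lambda>_. 0)"
  by (induction n) (auto simp: deriv_const)

lemma smooth_lin: "smooth_fun (\<lambda>x. k*x)"
  unfolding smooth_fun_def
proof (intro allI)
  fix n x
  show "((deriv ^^ n) (\<lambda>x. k*x)) differentiable (at x)"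
  proof (cases n)
    case 0 then show ?thesis by simp
  next
    case (Suc m)
    then show ?thesis
    proof (cases m)
      case 0 then show ?thesis using Suc by (simp add: deriv_lin)
    next
      case (Suc j)
      have "(deriv ^^ n) (\<lambda>x. k*x) = (deriv ^^ j) (\<lambda>_. 0)"
        using \<open>n = Suc m\<close> Suc by (simp only: funpow_Suc_right o_def deriv_lin deriv_const)
      then show ?thesis by (simp add: funpow_deriv_zero)
    qed
  qed
qed

lemma xdx_vf: "(\<lambda>p. k * xdx p) \<in> vector_fields"
proof -
  have "infchart_rep (\<lambda>p. k * xdx p) = (\<lambda>y. (-k)*y)"
    by (rule ext) (auto simp: infchart_rep_def power2_eq_square)
  moreover have "(\<lambda>x. k * xdx (Fin x)) = (\<lambda>x. k * x)" by simp
  ultimately show ?thesis unfolding vector_fields_def mem_Collect_eq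
    by (simp only: smooth_lin)
qed

lemma inv_diag: "a*d = 1 \<Longrightarrow> invariant_by (a,0,0,d) (\<lambda>p. k * xdx p)"
  unfolding invariant_by_def
proof
  fix p assume ad: "a*d = 1"
  then have a0: "a \<noteq> 0" and d0: "d \<noteq> 0" by auto
  show "k * xdx (act (a,0,0,d) p) = dact (a,0,0,d) p * (k * xdx p)"
    using dact_diag_fin[OF d0] dact_diag_inf[OF a0] d0 by (cases p) auto
qed

lemma inv_zero: "invariant_by h (\<lambda>p. 0)"
  unfolding invariant_by_def by simp

lemma ell_form:
  assumes "elliptic h" "act h ` {Fin 0, Infty} = {Fin 0, Infty}"
  shows "\<exists>b c. h = (0,b,c,0) \<and> b*c = -1"
proof -
  obtain a b c d where h: "h = (a,b,c,d)" by (cases h) auto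
  have nf: "act h Infty \<noteq> Infty" "act h (Fin 0) \<noteq> Fin 0"
    using assms(1) unfolding elliptic_def fixset_def by auto
  have "act h Infty \<in> {Fin 0, Infty}" "act h (Fin 0) \<in> {Fin 0, Infty}" using assms(2) by auto
  then have e: "act h Infty = Fin 0" "act h (Fin 0) = Infty" using nf by auto
  from e(1) h have "c \<noteq> 0" "a = 0" by (auto split: if_splits)
  moreover from e(2) h have "d = 0" by (auto split: if_splits)
  moreover from assms(1) h have "a*d - b*c = 1" by (auto simp: elliptic_def SL2_def)
  ultimately show ?thesis using h by auto
qed

lemma ell_kills:
  assumes bc: "b*c = -1" and inv: "invariant_by (0,b,c,0) (\<lambda>p. k * xdx p)"
  shows "k = 0"
proof -
  have c0: "c \<noteq> 0" and b0: "b \<noteq> 0" using bc by auto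
  have "((\<lambda>t. (0*t + b)/(c*t + 0)) has_real_derivative -b/c) (at 1)"
    using c0 by (auto intro!: derivative_eq_intros simp: field_simps power2_eq_square)
  then have "deriv (\<lambda>t. (0*t + b)/(c*t + 0)) 1 = -b/c" by (rule DERIV_imp_deriv)
  then have dd: "dact (0,b,c,0) (Fin 1) = -b/c" using c0 by simp
  have "k * xdx (act (0,b,c,0) (Fin 1)) = dact (0,b,c,0) (Fin 1) * (k * xdx (Fin 1))"
    using inv unfolding invariant_by_def by blast
  then have "k * (b/c) = (-b/c) * k" unfolding dd using c0 by simp
  then have "2 * k * (b/c) = 0" by (simp add: algebra_simps)
  then show ?thesis using b0 c0 by simp
qed

lemma act_mid: "act mid p = p" by (cases p) (auto simp: mid_def)
lemma act_mnegid: "act mnegid p = p" by (cases p) (auto simp: mnegid_def)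

lemma fix_univ: "fixset mid = UNIV" "fixset mnegid = UNIV"
  unfolding fixset_def using act_mid act_mnegid by auto

lemma card_univ_ext: "\<not> (finite (UNIV::ext set) \<and> card (UNIV::ext set) = 2)"
proof
  assume a: "finite (UNIV::ext set) \<and> card (UNIV::ext set) = 2"
  have "card {Fin 0, Fin 1, Infty} \<le> card (UNIV::ext set)" using a by (intro card_mono) auto
  then show False using a by simp
qed

lemma hyp_not_id: "hyperbolic h \<Longrightarrow> h \<noteq> mid \<and> h \<noteq> mnegid"
  using card_univ_ext fix_univ unfolding hyperbolic_def by metis

lemma hyp_not_ell: "hyperbolic h \<Longrightarrow> \<not> elliptic h"
  unfolding hyperbolic_def elliptic_def by auto

lemma ell_not_id: "elliptic h \<Longrightarrow> h \<noteq> mid \<and> h \<noteq> mnegid"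
  using fix_univ unfolding elliptic_def by auto

lemma ell_not_hyp: "elliptic h \<Longrightarrow> \<not> hyperbolic h"
  unfolding hyperbolic_def elliptic_def by auto

theorem lemma3p15:
  shows "(\<forall>Z h. Z \<in> vector_fields \<longrightarrow> hyperbolic h \<longrightarrow> fixset h = {Fin 0, Infty}
            \<longrightarrow> invariant_by h Z \<longrightarrow> (\<exists>\<kappa>::real. Z = (\<lambda>p. \<kappa> * xdx p)))
    \<and> (\<forall>H. psl_subgroup H \<longrightarrow> (\<exists>h\<in>H. hyperbolic h)
            \<longrightarrow> (\<forall>h\<in>H. h = mid \<or> h = mnegid
                  \<or> (hyperbolic h \<and> fixset h = {Fin 0, Infty})
                  \<or> (elliptic h \<and> act h ` {Fin 0, Infty} = {Fin 0, Infty}))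
            \<longrightarrow> ((\<not> (\<exists>h\<in>H. elliptic h) \<longrightarrow>
                    invariant_fields H = {Z. \<exists>\<kappa>::real. Z = (\<lambda>p. \<kappa> * xdx p)})
               \<and> ((\<exists>h\<in>H. elliptic h) \<longrightarrow> invariant_fields H = {\<lambda>p. 0})))"
proof (intro conjI allI impI)
  fix Z h assume "Z \<in> vector_fields" "hyperbolic h" "fixset h = {Fin 0, Infty}" "invariant_by h Z"
  then show "\<exists>\<kappa>::real. Z = (\<lambda>p. \<kappa> * xdx p)"
    using hyp_form part1 by metis
next
  fix H assume sg: "psl_subgroup H" and hh: "\<exists>h\<in>H. hyperbolic h"
    and cl: "\<forall>h\<in>H. h = mid \<or> h = mnegid
                  \<or> (hyperbolic h \<and> fixset h = {Fin 0, Infty})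
                  \<or> (elliptic h \<and> act h ` {Fin 0, Infty} = {Fin 0, Infty})"
  obtain h0 where h0: "h0 \<in> H" "hyperbolic h0" using hh by blast
  have h0f: "fixset h0 = {Fin 0, Infty}"
    using cl h0 hyp_not_id[OF h0(2)] hyp_not_ell[OF h0(2)] by blast
  have sub: "\<exists>\<kappa>::real. Z = (\<lambda>p. \<kappa> * xdx p)" if "Z \<in> invariant_fields H" for Z
    using that h0 h0f hyp_form part1 unfolding invariant_fields_def by (metis (no_types, lifting) mem_Collect_eq)
  show "invariant_fields H = {Z. \<exists>\<kappa>::real. Z = (\<lambda>p. \<kappa> * xdx p)}" if ne: "\<not> (\<exists>h\<in>H. elliptic h)"
  proof
    show "invariant_fields H \<subseteq> {Z. \<exists>\<kappa>::real. Z = (\<lambda>p. \<kappa> * xdx p)}" using sub by blast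
  next
    show "{Z. \<exists>\<kappa>::real. Z = (\<lambda>p. \<kappa> * xdx p)} \<subseteq> invariant_fields H"
    proof safe
      fix k
      have "invariant_by h (\<lambda>p. k * xdx p)" if "h \<in> H" for h
      proof -
        have "h = mid \<or> h = mnegid \<or> (hyperbolic h \<and> fixset h = {Fin 0, Infty})"
          using cl ne that by blast
        then show ?thesis
        proof (elim disjE)
          assume "h = mid" then show ?thesis using inv_diag[of 1 1] by (simp add: mid_def)
        next
          assume "h = mnegid" then show ?thesis using inv_diag[of "-1" "-1"] by (simp add: mnegid_def)
        next
          assume "hyperbolic h \<and> fixset h = {Fin 0, Infty}"
          then show ?thesis using hyp_form inv_diag by metis
        qed
      qed
      then show "(\<lambda>p. k * xdx p) \<in> invariant_fields H"
        unfolding invariant_fields_def using xdx_vf by blast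
    qed
  qed
  show "invariant_fields H = {\<lambda>p. 0}" if he: "\<exists>h\<in>H. elliptic h"
  proof
    obtain he where he: "he \<in> H" "elliptic he" using he by blast
    have "act he ` {Fin 0, Infty} = {Fin 0, Infty}"
      using cl he ell_not_id[OF he(2)] ell_not_hyp[OF he(2)] by blast
    then obtain b c where bc: "he = (0,b,c,0)" "b*c = -1" using ell_form he(2) by blast
    show "invariant_fields H \<subseteq> {\<lambda>p. 0}"
    proof
      fix Z assume Z: "Z \<in> invariant_fields H"
      then obtain k where k: "Z = (\<lambda>p. k * xdx p)" using sub by blast
      have "invariant_by he Z" using Z he unfolding invariant_fields_def by blast
      then have "k = 0" using ell_kills[OF bc(2)] bc(1) k by simp
      then show "Z \<in> {\<lambda>p. 0}" using k by simp
    qed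
  next
    have "(\<lambda>p. 0 * xdx p) \<in> vector_fields" by (rule xdx_vf)
    then show "{\<lambda>p. 0} \<subseteq> invariant_fields H"
      unfolding invariant_fields_def using inv_zero by simp
  qed
qed

end
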